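(* Consider a well-formed execution $\beta$ of the md-value protocol described in the context in which the event $\text{md-value-send}(t,v)_p$ occurs (at writer $p$). Then there is a state $\sigma$ of $\beta$ occurring after the event $\text{md-value-send}(t,v)_p$ such that, for the sender automaton of $p$ and for the server automaton of every $s\in\mathcal{S}$, either (i) that automaton's variable $failed$ is $true$, or (ii) in every state of $\beta$ following $\sigma$, none of that automaton's state variables contains $v$ or any of the coded elements $\Phi_{s'}(v)$, $s'\in\mathcal{S}$.
   Context: System model: an asynchronous message-passing system with a set $\mathcal{W}$ of writers, a set $\mathcal{R}$ of readers and a set $\mathcal{S}$ of $n$ servers, ordered $s_1<\dots<s_n$. Every client–server pair and every server–server pair is joined by a reliable point-to-point channel (a message is eventually delivered if the destination does not crash, even if the sender crashes; no ordering assumption). Processes fail only by crashing; at most $f$ servers crash, $1\le f\le (n-1)/2$; any number of clients may crash. An execution is well-formed if each client starts a new operation only after its previous one completed. Coding: $[n,k]$ MDS code with encoder $\Phi$; $\Phi_s(v)$ is the coded element of value $v$ for server $s$. Tags lie in a totally ordered set $\mathcal{T}$. The md-value protocol as I/O automata. Sender automaton at writer $p$: state variables $failed$ (Boolean, initially false), $active$ (Boolean), $mCount$ (integer counter), a FIFO queue $send\_buff$ (initially empty), a message identifier $mID$, and $currTag$. On input $\text{md-value-send}(t,v)_p$ (if not failed): $mCount$ is incremented, $mID\gets(p,mCount)$, $send\_buff$ is set to the messages $((mID,(t,v),\text{"full"}),s)$ for $s\in\{s_1,\dots,s_{f+1}\}$ in server order, $active\gets true$, $currTag\gets t$. The output $\text{send}$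 action (enabled when not failed) removes the first element of $send\_buff$ and puts its message on the channel to its destination; when $send\_buff$ is empty and $active$ holds, output $\text{md-value-send-ack}(t)_p$ sets $active\gets false$, $currTag\gets\bot$. An internal $\text{fail}$ action sets $failed\gets true$, after which no further actions are taken. Server automaton at $s=s_i$: state variables $failed$ (initially false), a map $status$ from message identifiers to $\{\text{ready},\text{sending},\text{delivered}\}$ (initially undefined, $\bot$), a map $content$ from message identifiers to a (tag, coded element) pair or $\bot$, and per-identifier FIFO output queues $outQueue(mID)$. On receiving $(mID,(t,v),\text{"full"})$ (if not failed and $status(mID)=\bot$): append to $outQueue(mID)$ the messages $(mID,(t,v),\text{"full"})$ for $s_{i+1},\dots,s_{f+1}$ and $(mID,(t,\Phi_{s'}(v)),\text{"coded"})$ for every other server $s'$ outside $\{s_{1},\dots,s_{f+1}\}$; set $status(mID)\gets\text{sending}$ and $content(mID)\gets(t,\Phi_s(v))$. On receiving $(mID,(t,c),\text{"coded"})$ (if not failed and $status(mID)\neq\text{delivered}$): $status(mID)\gets\text{ready}$, $content(mID)\gets(t,c)$. The output $\text{send}$ action (if not failed) sends the first element of $outQueue(mID)$ and removes it; if the queue becomes empty, $status(mID)\gets\text{ready}$. The output $\text{md-value-deliver}(t,c)_s$ is enabled when not failed, $status(mID)=\text{ready}$ and $content(mID)=(t,c)$; it sets $status(mID)\gets\text{delivered}$ and $content(mID)\gets\bot$. An internal $\text{fail}$ action sets $failed\gets true$. The protocol is the composition of these automata with the reliable channel automata.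
   Formalization: Condition (ii) concerns only the copy of v and the coded elements $\Phi_{s'}(v)$ tagged with the identifier mID = (p, mCount+1) created by this md-value-send event, and $\beta$ is fair: every locally controlled action that stays enabled eventually occurs. The paper assumes this as well. *)

theory Defs
  imports Main "HOL-Library.Multiset"
begin

text \<open>Model of the md-value protocol as a composition of I/O automata
(sender automata at the writers, server automata, reliable unordered channels).
Servers s_1 < ... < s_n are represented by the indices 0 < ... < n-1
(index i stands for s_(i+1)); writers are all elements of the type 'w.\<close>

type_synonym 'w mid = "'w \<times> nat"

datatype ('w,'t,'v,'c) msg = Full "'w mid" 't 'v | Coded "'w mid" 't 'c

datatype srv_status = Ready | Sending | Delivered

record ('w,'t,'v,'c) sender_st =
  wfailed :: bool
  active :: bool
  mCount :: nat
  send_buff :: "(('w,'t,'v,'c) msg \<times> nat) list"   (* (message, destination server) *)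
  cur_mID :: "'w mid option"
  currTag :: "'t option"

record ('w,'t,'v,'c) server_st =
  sfailed :: bool
  status :: "'w mid \<Rightarrow> srv_status option"
  content :: "'w mid \<Rightarrow> ('t \<times> 'c) option"
  outQueue :: "'w mid \<Rightarrow> (('w,'t,'v,'c) msg \<times> nat) list"

record ('w,'t,'v,'c) gstate =
  wst :: "'w \<Rightarrow> ('w,'t,'v,'c) sender_st"
  sst :: "nat \<Rightarrow> ('w,'t,'v,'c) server_st"
  net :: "(('w,'t,'v,'c) msg \<times> nat) multiset"

datatype ('w,'t,'v,'c) action =
    MdSend 'w 't 'v                      (* input md-value-send(t,v)_p *)
  | SendW 'w
  | Ack 'w                               (* output md-value-send-ack_p *)
  | FailW 'w
  | Recv "('w,'t,'v,'c) msg" nat          (* channel delivers message to server *)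
  | SendS nat "'w mid"
  | Deliver nat "'w mid"                 (* output md-value-deliver(t,c)_s for mID *)
  | FailS nat

definition init_state :: "('w,'t,'v,'c) gstate" where
  "init_state = \<lparr> wst = (\<lambda>p. \<lparr> wfailed = False, active = False, mCount = 0, send_buff = [],
                                 cur_mID = None, currTag = None \<rparr>),
                  sst = (\<lambda>i. \<lparr> sfailed = False, status = (\<lambda>_. None), content = (\<lambda>_. None),
                                 outQueue = (\<lambda>_. []) \<rparr>),
                  net = {#} \<rparr>"

definition srv_recv :: "nat \<Rightarrow> nat \<Rightarrow> (nat \<Rightarrow> 'v \<Rightarrow> 'c) \<Rightarrow> nat \<Rightarrow> ('w,'t,'v,'c) msg
    \<Rightarrow> ('w,'t,'v,'c) server_st \<Rightarrow> ('w,'t,'v,'c) server_st" where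
  "srv_recv n f \<Phi> i m s = (case m of
      Full M t v \<Rightarrow>
        (if \<not> sfailed s \<and> status s M = None then
           s\<lparr> outQueue := (outQueue s)(M := outQueue s M
                  @ [(Full M t v, j). j \<leftarrow> [Suc i..<Suc f]]
                  @ [(Coded M t (\<Phi> j v), j). j \<leftarrow> [Suc f..<n], j \<noteq> i]),
              status := (status s)(M := Some Sending),
              content := (content s)(M := Some (t, \<Phi> i v)) \<rparr>
         else s)
    | Coded M t c \<Rightarrow>
        (if \<not> sfailed s \<and> status s M \<noteq> Some Delivered then
           s\<lparr> status := (status s)(M := Some Ready),
              content := (content s)(M := Some (t, c)) \<rparr>
         else s))"

text \<open>Transition function of the composed system: None = action not enabled.\<close>
definition trans :: "nat \<Rightarrow> nat \<Rightarrow> (nat \<Rightarrow> 'v \<Rightarrow> 'c) \<Rightarrow> ('w,'t,'v,'c) action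
    \<Rightarrow> ('w,'t,'v,'c) gstate \<Rightarrow> ('w,'t,'v,'c) gstate option" where
  "trans n f \<Phi> a \<sigma> = (case a of
      MdSend p t v \<Rightarrow> (let w = wst \<sigma> p; M = (p, Suc (mCount w)) in
         Some (if wfailed w then \<sigma> else
           \<sigma>\<lparr> wst := (wst \<sigma>)(p := w\<lparr> mCount := Suc (mCount w), cur_mID := Some M,
                 send_buff := [(Full M t v, j). j \<leftarrow> [0..<Suc f]],
                 active := True, currTag := Some t \<rparr>) \<rparr>))
    | SendW p \<Rightarrow> (let w = wst \<sigma> p in
         if \<not> wfailed w \<and> send_buff w \<noteq> [] then
           Some (\<sigma>\<lparr> wst := (wst \<sigma>)(p := w\<lparr> send_buff := tl (send_buff w) \<rparr>),
                    net := net \<sigma> + {# hd (send_buff w) #} \<rparr>)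
         else None)
    | Ack p \<Rightarrow> (let w = wst \<sigma> p in
         if \<not> wfailed w \<and> send_buff w = [] \<and> active w then
           Some (\<sigma>\<lparr> wst := (wst \<sigma>)(p := w\<lparr> active := False, currTag := None \<rparr>) \<rparr>)
         else None)
    | FailW p \<Rightarrow> Some (\<sigma>\<lparr> wst := (wst \<sigma>)(p := (wst \<sigma> p)\<lparr> wfailed := True \<rparr>) \<rparr>)
    | Recv m i \<Rightarrow>
         (if i < n \<and> (m, i) \<in># net \<sigma> then
            Some (\<sigma>\<lparr> net := net \<sigma> - {# (m, i) #},
                     sst := (sst \<sigma>)(i := srv_recv n f \<Phi> i m (sst \<sigma> i)) \<rparr>)
          else None)
    | SendS i M \<Rightarrow> (let s = sst \<sigma> i; q = outQueue s M in
         if i < n \<and> \<not> sfailed s \<and> q \<noteq> [] then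
           Some (\<sigma>\<lparr> sst := (sst \<sigma>)(i := s\<lparr> outQueue := (outQueue s)(M := tl q),
                       status := (if tl q = [] then (status s)(M := Some Ready) else status s) \<rparr>),
                    net := net \<sigma> + {# hd q #} \<rparr>)
         else None)
    | Deliver i M \<Rightarrow> (let s = sst \<sigma> i in
         if i < n \<and> \<not> sfailed s \<and> status s M = Some Ready \<and> content s M \<noteq> None then
           Some (\<sigma>\<lparr> sst := (sst \<sigma>)(i := s\<lparr> status := (status s)(M := Some Delivered),
                                               content := (content s)(M := None) \<rparr>) \<rparr>)
         else None)
    | FailS i \<Rightarrow> (if i < n then Some (\<sigma>\<lparr> sst := (sst \<sigma>)(i := (sst \<sigma> i)\<lparr> sfailed := True \<rparr>) \<rparr>)
                  else None))"

definition enabled :: "nat \<Rightarrow> nat \<Rightarrow> (nat \<Rightarrow> 'v \<Rightarrow> 'c) \<Rightarrow> ('w,'t,'v,'c) action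
    \<Rightarrow> ('w,'t,'v,'c) gstate \<Rightarrow> bool" where
  "enabled n f \<Phi> a \<sigma> \<longleftrightarrow> trans n f \<Phi> a \<sigma> \<noteq> None"

text \<open>Locally controlled (output/internal) actions subject to fairness; md-value-send
is an input from the environment, crashes are not forced.\<close>
fun locally_controlled :: "('w,'t,'v,'c) action \<Rightarrow> bool" where
  "locally_controlled (MdSend _ _ _) = False"
| "locally_controlled (FailW _) = False"
| "locally_controlled (FailS _) = False"
| "locally_controlled _ = True"

text \<open>An execution is an infinite sequence of states ex 0, ex 1, ...; act k is the
action taken from ex k to ex (Suc k), None meaning a stuttering (no) step
(finite executions are padded by stuttering).\<close>
definition is_execution :: "nat \<Rightarrow> nat \<Rightarrow> (nat \<Rightarrow> 'v \<Rightarrow> 'c) \<Rightarrow> (nat \<Rightarrow> ('w,'t,'v,'c) gstate)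
    \<Rightarrow> (nat \<Rightarrow> ('w,'t,'v,'c) action option) \<Rightarrow> bool" where
  "is_execution n f \<Phi> ex act \<longleftrightarrow> ex 0 = init_state \<and>
     (\<forall>k. case act k of None \<Rightarrow> ex (Suc k) = ex k
                      | Some a \<Rightarrow> trans n f \<Phi> a (ex k) = Some (ex (Suc k)))"

text \<open>Weak fairness: no locally controlled action stays enabled forever without occurring.
(Channel deliveries are locally controlled actions of the channels: reliability.)\<close>
definition fair :: "nat \<Rightarrow> nat \<Rightarrow> (nat \<Rightarrow> 'v \<Rightarrow> 'c) \<Rightarrow> (nat \<Rightarrow> ('w,'t,'v,'c) gstate)
    \<Rightarrow> (nat \<Rightarrow> ('w,'t,'v,'c) action option) \<Rightarrow> bool" where
  "fair n f \<Phi> ex act \<longleftrightarrow>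
     (\<forall>a. locally_controlled a \<longrightarrow>
        \<not> (\<exists>k0. \<forall>k\<ge>k0. enabled n f \<Phi> a (ex k) \<and> act k \<noteq> Some a))"

definition crash_bound :: "nat \<Rightarrow> nat \<Rightarrow> (nat \<Rightarrow> ('w,'t,'v,'c) gstate) \<Rightarrow> bool" where
  "crash_bound n f ex \<longleftrightarrow> (\<forall>k. card {i. i < n \<and> sfailed (sst (ex k) i)} \<le> f)"

definition well_formed :: "(nat \<Rightarrow> ('w,'t,'v,'c) action option) \<Rightarrow> bool" where
  "well_formed act \<longleftrightarrow>
     (\<forall>p i j t v t' v'. i < j \<and> act i = Some (MdSend p t v) \<and> act j = Some (MdSend p t' v')
        \<longrightarrow> (\<exists>k. i < k \<and> k < j \<and> act k = Some (Ack p)))"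

definition mds_code :: "nat \<Rightarrow> nat \<Rightarrow> (nat \<Rightarrow> 'v \<Rightarrow> 'c) \<Rightarrow> bool" where
  "mds_code n k \<Phi> \<longleftrightarrow> 1 \<le> k \<and> k \<le> n \<and>
     (\<forall>S v v'. S \<subseteq> {..<n} \<and> card S = k \<and> (\<forall>s\<in>S. \<Phi> s v = \<Phi> s v') \<longrightarrow> v = v')"

definition msg_carries :: "nat \<Rightarrow> (nat \<Rightarrow> 'v \<Rightarrow> 'c) \<Rightarrow> 'w mid \<Rightarrow> 'v \<Rightarrow> ('w,'t,'v,'c) msg \<Rightarrow> bool" where
  "msg_carries n \<Phi> M v m \<longleftrightarrow>
     (\<exists>t. m = Full M t v \<or> (\<exists>s'<n. m = Coded M t (\<Phi> s' v)))"

definition sender_holds :: "nat \<Rightarrow> (nat \<Rightarrow> 'v \<Rightarrow> 'c) \<Rightarrow> 'w mid \<Rightarrow> 'v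
    \<Rightarrow> ('w,'t,'v,'c) sender_st \<Rightarrow> bool" where
  "sender_holds n \<Phi> M v w \<longleftrightarrow> (\<exists>m d. (m, d) \<in> set (send_buff w) \<and> msg_carries n \<Phi> M v m)"

definition server_holds :: "nat \<Rightarrow> (nat \<Rightarrow> 'v \<Rightarrow> 'c) \<Rightarrow> 'w mid \<Rightarrow> 'v
    \<Rightarrow> ('w,'t,'v,'c) server_st \<Rightarrow> bool" where
  "server_holds n \<Phi> M v s \<longleftrightarrow>
     (\<exists>t s'. s' < n \<and> content s M = Some (t, \<Phi> s' v)) \<or>
     (\<exists>m d. (m, d) \<in> set (outQueue s M) \<and> msg_carries n \<Phi> M v m)"

end

theory Submission
  imports Defs
begin


fun mid_of :: "('w,'t,'v,'c) msg \<Rightarrow> 'w mid" where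
  "mid_of (Full M _ _) = M" | "mid_of (Coded M _ _) = M"

fun is_full :: "('w,'t,'v,'c) msg \<Rightarrow> bool" where
  "is_full (Full _ _ _) = True" | "is_full (Coded _ _ _) = False"

definition inv1 :: "nat \<Rightarrow> ('w,'t,'v,'c) gstate \<Rightarrow> bool" where
  "inv1 f \<sigma> \<longleftrightarrow> (\<forall>q m d. (m,d) \<in> set (send_buff (wst \<sigma> q)) \<longrightarrow>
      mid_of m = (q, mCount (wst \<sigma> q)) \<and> (is_full m \<longrightarrow> d \<le> f))"

definition inv2 :: "nat \<Rightarrow> ('w,'t,'v,'c) gstate \<Rightarrow> bool" where
  "inv2 f \<sigma> \<longleftrightarrow> (\<forall>i M m d. (m,d) \<in> set (outQueue (sst \<sigma> i) M) \<longrightarrow>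
      mid_of m = M \<and> (is_full m \<longrightarrow> d \<le> f))"

definition inv3 :: "nat \<Rightarrow> ('w,'t,'v,'c) gstate \<Rightarrow> bool" where
  "inv3 f \<sigma> \<longleftrightarrow> (\<forall>m d. (m,d) \<in># net \<sigma> \<longrightarrow> is_full m \<longrightarrow> d \<le> f)"

definition inv4 :: "('w,'t,'v,'c) gstate \<Rightarrow> bool" where
  "inv4 \<sigma> \<longleftrightarrow> (\<forall>i M. (status (sst \<sigma> i) M = None \<longrightarrow> content (sst \<sigma> i) M = None \<and> outQueue (sst \<sigma> i) M = [])
      \<and> (status (sst \<sigma> i) M = Some Delivered \<longrightarrow> content (sst \<sigma> i) M = None)
      \<and> (status (sst \<sigma> i) M = Some Sending \<longrightarrow> outQueue (sst \<sigma> i) M \<noteq> []))"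

definition minv :: "nat \<Rightarrow> ('w,'t,'v,'c) gstate \<Rightarrow> bool" where
  "minv f \<sigma> \<longleftrightarrow> inv1 f \<sigma> \<and> inv2 f \<sigma> \<and> inv3 f \<sigma> \<and> inv4 \<sigma>"

lemma minv_init: "minv f init_state"
  by (simp add: minv_def inv1_def inv2_def inv3_def inv4_def init_state_def)

lemma srv_recv_other:
  "mid_of m \<noteq> M \<Longrightarrow> status (srv_recv n f \<Phi> i m s) M = status s M \<and>
     content (srv_recv n f \<Phi> i m s) M = content s M \<and> outQueue (srv_recv n f \<Phi> i m s) M = outQueue s M"
  by (cases m) (auto simp: srv_recv_def)

lemma srv_recv_failed: "sfailed (srv_recv n f \<Phi> i m s) = sfailed s"
  by (cases m) (auto simp: srv_recv_def)

lemma inv_MdSend: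
  assumes "minv f \<sigma>" "trans n f \<Phi> (MdSend q t v) \<sigma> = Some \<sigma>'"
  shows "minv f \<sigma>'"
  using assms unfolding trans_def Let_def minv_def inv1_def inv2_def inv3_def inv4_def
  by (auto split: if_splits)

lemma inv_SendW:
  assumes "minv f \<sigma>" "trans n f \<Phi> (SendW q) \<sigma> = Some \<sigma>'"
  shows "minv f \<sigma>'"
proof -
  let ?b = "send_buff (wst \<sigma> q)"
  have ne: "?b \<noteq> []" and s': "\<sigma>' = \<sigma>\<lparr> wst := (wst \<sigma>)(q := (wst \<sigma> q)\<lparr> send_buff := tl ?b \<rparr>),
                    net := net \<sigma> + {# hd ?b #} \<rparr>"
    using assms(2) by (auto simp: trans_def Let_def split: if_splits)
  have "hd ?b \<in> set ?b" using ne by simp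
  moreover have "\<And>x. x \<in> set (tl ?b) \<Longrightarrow> x \<in> set ?b" by (meson list.set_sel(2) ne)
  ultimately show ?thesis using assms(1) unfolding s' minv_def inv1_def inv2_def inv3_def inv4_def
    by (auto simp: split_beta) (metis prod.collapse)+
qed

lemma inv_Ack: "minv f \<sigma> \<Longrightarrow> trans n f \<Phi> (Ack q) \<sigma> = Some \<sigma>' \<Longrightarrow> minv f \<sigma>'"
  unfolding trans_def Let_def minv_def inv1_def inv2_def inv3_def inv4_def
  by (auto split: if_splits)

lemma inv_FailW: "minv f \<sigma> \<Longrightarrow> trans n f \<Phi> (FailW q) \<sigma> = Some \<sigma>' \<Longrightarrow> minv f \<sigma>'"
  unfolding trans_def Let_def minv_def inv1_def inv2_def inv3_def inv4_def
  by (auto split: if_splits)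

lemma inv_FailS: "minv f \<sigma> \<Longrightarrow> trans n f \<Phi> (FailS i) \<sigma> = Some \<sigma>' \<Longrightarrow> minv f \<sigma>'"
  unfolding trans_def Let_def minv_def inv1_def inv2_def inv3_def inv4_def
  by (auto split: if_splits)

lemma inv_Deliver: "minv f \<sigma> \<Longrightarrow> trans n f \<Phi> (Deliver i M) \<sigma> = Some \<sigma>' \<Longrightarrow> minv f \<sigma>'"
  unfolding trans_def Let_def minv_def inv1_def inv2_def inv3_def inv4_def
  by (auto split: if_splits)

lemma inv_SendS:
  assumes "minv f \<sigma>" "trans n f \<Phi> (SendS i M) \<sigma> = Some \<sigma>'"
  shows "minv f \<sigma>'"
proof -
  let ?s = "sst \<sigma> i"
  let ?q = "outQueue ?s M"
  have ne: "?q \<noteq> []" and s': "\<sigma>' = \<sigma>\<lparr> sst := (sst \<sigma>)(i := ?s\<lparr> outQueue := (outQueue ?s)(M := tl ?q),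
                       status := (if tl ?q = [] then (status ?s)(M := Some Ready) else status ?s) \<rparr>),
                    net := net \<sigma> + {# hd ?q #} \<rparr>"
    using assms(2) by (auto simp: trans_def Let_def split: if_splits)
  have h: "hd ?q \<in> set ?q" using ne by simp
  have t: "\<And>x. x \<in> set (tl ?q) \<Longrightarrow> x \<in> set ?q" by (meson list.set_sel(2) ne)
  show ?thesis using assms(1) unfolding minv_def
  proof (intro conjI)
    show "inv1 f \<sigma>'" using assms(1) unfolding s' minv_def inv1_def by auto
    show "inv2 f \<sigma>'" unfolding inv2_def
    proof (intro allI impI)
      fix i' M' m d assume a: "(m, d) \<in> set (outQueue (sst \<sigma>' i') M')"
      have "(m, d) \<in> set (outQueue (sst \<sigma> i') M')"
        using a t unfolding s' by (auto split: if_splits)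
      then show "mid_of m = M' \<and> (is_full m \<longrightarrow> d \<le> f)" using assms(1) unfolding minv_def inv2_def by blast
    qed
    show "inv3 f \<sigma>'" using assms(1) h unfolding s' minv_def inv2_def inv3_def
      by (auto simp: split_beta) (metis prod.collapse)
    show "inv4 \<sigma>'" using assms(1) ne unfolding s' minv_def inv4_def by auto
  qed
qed

lemma inv_Recv:
  assumes "minv f \<sigma>" "trans n f \<Phi> (Recv m i) \<sigma> = Some \<sigma>'" "Suc f < n"
  shows "minv f \<sigma>'"
proof -
  let ?s = "sst \<sigma> i"
  have inn: "(m, i) \<in># net \<sigma>" and s': "\<sigma>' = \<sigma>\<lparr> net := net \<sigma> - {# (m, i) #},
                     sst := (sst \<sigma>)(i := srv_recv n f \<Phi> i m ?s) \<rparr>"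
    using assms(2) by (auto simp: trans_def Let_def split: if_splits)
  have fi: "is_full m \<Longrightarrow> i \<le> f" using assms(1) inn unfolding minv_def inv3_def by blast
  have i1: "inv1 f \<sigma>'" using assms(1) unfolding s' minv_def inv1_def by auto
  have i3: "inv3 f \<sigma>'" using assms(1) unfolding s' minv_def inv3_def
    by (auto dest: in_diffD)
  have srv: "(\<forall>M m' d. (m',d) \<in> set (outQueue (srv_recv n f \<Phi> i m ?s) M) \<longrightarrow>
      mid_of m' = M \<and> (is_full m' \<longrightarrow> d \<le> f)) \<and>
     (\<forall>M. (status (srv_recv n f \<Phi> i m ?s) M = None \<longrightarrow> content (srv_recv n f \<Phi> i m ?s) M = None \<and> outQueue (srv_recv n f \<Phi> i m ?s) M = [])
      \<and> (status (srv_recv n f \<Phi> i m ?s) M = Some Delivered \<longrightarrow> content (srv_recv n f \<Phi> i m ?s) M = None)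
      \<and> (status (srv_recv n f \<Phi> i m ?s) M = Some Sending \<longrightarrow> outQueue (srv_recv n f \<Phi> i m ?s) M \<noteq> []))"
  proof (cases m)
    case (Full M0 t0 v0)
    have ifl: "i \<le> f" using fi Full by simp
    have "Suc f \<in> set [j\<leftarrow>[Suc f..<n]. j \<noteq> i]" using ifl assms(3) by auto
    then have nonempty: "[(Coded M0 t0 (\<Phi> j v0), j). j \<leftarrow> [Suc f..<n], j \<noteq> i] \<noteq> []"
      using assms(3) ifl by (auto intro!: bexI[where x="[(Coded M0 t0 (\<Phi> (Suc f) v0), Suc f)]"])
    show ?thesis using assms(1) nonempty unfolding Full srv_recv_def minv_def inv2_def inv4_def
      by (auto split: if_splits)
  next
    case (Coded M0 t0 c0)
    show ?thesis using assms(1) unfolding Coded srv_recv_def minv_def inv2_def inv4_def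
      by (auto split: if_splits)
  qed
  have i2: "inv2 f \<sigma>'" using assms(1) srv unfolding s' minv_def inv2_def by auto
  have i4: "inv4 \<sigma>'" using assms(1) srv unfolding s' minv_def inv4_def by auto
  show ?thesis using i1 i2 i3 i4 by (simp add: minv_def)
qed

lemma minv_step:
  assumes "minv f \<sigma>" "trans n f \<Phi> a \<sigma> = Some \<sigma>'" "Suc f < n"
  shows "minv f \<sigma>'"
  using assms by (cases a) (auto intro: inv_MdSend inv_SendW inv_Ack inv_FailW inv_Recv inv_SendS inv_Deliver inv_FailS)



definition wsrv :: "nat \<Rightarrow> 'w mid \<Rightarrow> ('w,'t,'v,'c) server_st \<Rightarrow> nat" where
  "wsrv n M s = (if status s M = None then 3*n else 0) + (if content s M = None then 0 else 1)
     + 3 * length (outQueue s M)"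

definition bpart :: "'w mid \<Rightarrow> ('w,'t,'v,'c) gstate \<Rightarrow> (('w,'t,'v,'c) msg \<times> nat) list" where
  "bpart M \<sigma> = filter (\<lambda>x. mid_of (fst x) = M) (send_buff (wst \<sigma> (fst M)))"

definition ncnt :: "'w mid \<Rightarrow> (('w,'t,'v,'c) msg \<times> nat) multiset \<Rightarrow> nat" where
  "ncnt M N = size (filter_mset (\<lambda>x. mid_of (fst x) = M) N)"

definition mu :: "nat \<Rightarrow> 'w mid \<Rightarrow> ('w,'t,'v,'c) gstate \<Rightarrow> nat" where
  "mu n M \<sigma> = 3 * length (bpart M \<sigma>) + 2 * ncnt M (net \<sigma>) + (\<Sum>i<n. wsrv n M (sst \<sigma> i))"

definition trip :: "'w mid \<Rightarrow> ('w,'t,'v,'c) server_st \<Rightarrow> _" where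
  "trip M s = (status s M, content s M, outQueue s M)"

definition mpart :: "nat \<Rightarrow> 'w mid \<Rightarrow> ('w,'t,'v,'c) gstate \<Rightarrow> _" where
  "mpart n M \<sigma> = (bpart M \<sigma>, \<lambda>i. if i < n then Some (trip M (sst \<sigma> i)) else None)"

lemma ncnt_add: "ncnt M (N + {#x#}) = ncnt M N + (if mid_of (fst x) = M then 1 else 0)"
  by (simp add: ncnt_def)

lemma ncnt_add_mset: "ncnt M (add_mset x N) = ncnt M N + (if mid_of (fst x) = M then 1 else 0)"
  by (simp add: ncnt_def)

lemma ncnt_diff: assumes "x \<in># N" shows "ncnt M (N - {#x#}) + (if mid_of (fst x) = M then 1 else 0) = ncnt M N"
proof -
  from assms obtain N' where N: "N = add_mset x N'" by (metis insert_DiffM)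
  show ?thesis unfolding N by (simp add: ncnt_def)
qed

lemma sum_upd:
  fixes g g' :: "nat \<Rightarrow> nat"
  assumes "i0 < n" "\<And>i. i \<noteq> i0 \<Longrightarrow> g' i = g i"
  shows "(\<Sum>i<n. g' i) + g i0 = (\<Sum>i<n. g i) + g' i0"
proof -
  have f: "finite {..<n}" "i0 \<in> {..<n}" using assms by auto
  have "(\<Sum>i<n. g' i) = g' i0 + (\<Sum>i\<in>{..<n}-{i0}. g' i)" by (rule sum.remove[OF f])
  moreover have "(\<Sum>i<n. g i) = g i0 + (\<Sum>i\<in>{..<n}-{i0}. g i)" by (rule sum.remove[OF f])
  moreover have "(\<Sum>i\<in>{..<n}-{i0}. g' i) = (\<Sum>i\<in>{..<n}-{i0}. g i)" using assms(2) by auto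
  ultimately show ?thesis by simp
qed

lemma server_local:
  assumes "wst \<sigma>' = wst \<sigma>" "i0 < n" "\<And>i. i \<noteq> i0 \<Longrightarrow> sst \<sigma>' i = sst \<sigma> i"
  shows "mu n M \<sigma>' + 2*ncnt M (net \<sigma>) + wsrv n M (sst \<sigma> i0) = mu n M \<sigma> + 2*ncnt M (net \<sigma>') + wsrv n M (sst \<sigma>' i0)"
    and "trip M (sst \<sigma>' i0) = trip M (sst \<sigma> i0) \<Longrightarrow> mpart n M \<sigma>' = mpart n M \<sigma>"
proof -
  have "(\<Sum>i<n. wsrv n M (sst \<sigma>' i)) + wsrv n M (sst \<sigma> i0) = (\<Sum>i<n. wsrv n M (sst \<sigma> i)) + wsrv n M (sst \<sigma>' i0)"
    by (rule sum_upd) (use assms in auto)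
  then show "mu n M \<sigma>' + 2*ncnt M (net \<sigma>) + wsrv n M (sst \<sigma> i0) = mu n M \<sigma> + 2*ncnt M (net \<sigma>') + wsrv n M (sst \<sigma>' i0)"
    unfolding mu_def bpart_def using assms(1) by simp
  show "trip M (sst \<sigma>' i0) = trip M (sst \<sigma> i0) \<Longrightarrow> mpart n M \<sigma>' = mpart n M \<sigma>"
  proof -
    assume h: "trip M (sst \<sigma>' i0) = trip M (sst \<sigma> i0)"
    have "\<And>i. trip M (sst \<sigma>' i) = trip M (sst \<sigma> i)"
      using h assms(3) by (case_tac "i = i0") auto
    then have "(\<lambda>i. if i < n then Some (trip M (sst \<sigma>' i)) else None) = (\<lambda>i. if i < n then Some (trip M (sst \<sigma> i)) else None)"
      by presburger
    then show ?thesis unfolding mpart_def bpart_def using assms(1) by simp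
  qed
qed

lemma writer_local:
  assumes "sst \<sigma>' = sst \<sigma>"
  shows "mu n M \<sigma>' + 3 * length (bpart M \<sigma>) + 2*ncnt M (net \<sigma>) = mu n M \<sigma> + 3 * length (bpart M \<sigma>') + 2*ncnt M (net \<sigma>')"
    and "bpart M \<sigma>' = bpart M \<sigma> \<Longrightarrow> mpart n M \<sigma>' = mpart n M \<sigma>"
  using assms by (auto simp: mu_def mpart_def)



abbreviation prog :: "nat \<Rightarrow> 'w mid \<Rightarrow> ('w,'t,'v,'c) gstate \<Rightarrow> ('w,'t,'v,'c) gstate \<Rightarrow> bool" where
  "prog n M \<sigma> \<sigma>' \<equiv> mu n M \<sigma>' < mu n M \<sigma> \<or> (mu n M \<sigma>' = mu n M \<sigma> \<and> mpart n M \<sigma>' = mpart n M \<sigma>)"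

lemma add_le_bound: "(a::nat) \<le> f \<Longrightarrow> b \<le> n - Suc f \<Longrightarrow> Suc f \<le> n \<Longrightarrow> a + b \<le> n" by arith

lemma wsrv_recv:
  assumes "mid_of m = M" "Suc f \<le> n"
  shows "wsrv n M (srv_recv n f \<Phi> i m s) \<le> wsrv n M s + 1"
proof (cases m)
  case (Full M0 t0 v0)
  let ?L = "[(Full M0 t0 v0, j). j \<leftarrow> [Suc i..<Suc f]] @ [(Coded M0 t0 (\<Phi> j v0), j). j \<leftarrow> [Suc f..<n], j \<noteq> i]"
  have l1: "length [(Full M0 t0 v0, j). j \<leftarrow> [Suc i..<Suc f]] \<le> f" by (cases "Suc i \<le> f") auto
  have e: "[(Coded M0 t0 (\<Phi> j v0), j). j \<leftarrow> [Suc f..<n], j \<noteq> i] = map (\<lambda>j. (Coded M0 t0 (\<Phi> j v0), j)) (filter (\<lambda>j. j \<noteq> i) [Suc f..<n])"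
    by (induction n) auto
  have l2: "length [(Coded M0 t0 (\<Phi> j v0), j). j \<leftarrow> [Suc f..<n], j \<noteq> i] \<le> n - Suc f"
    unfolding e by (simp add: order_trans[OF length_filter_le])
  have "length ?L \<le> n" using l1 l2 assms(2) by (simp only: length_append) (rule add_le_bound[OF _ _ assms(2)])
  then show ?thesis using assms(1) unfolding Full srv_recv_def wsrv_def by auto
next
  case (Coded M0 t0 c0)
  then show ?thesis using assms(1) unfolding srv_recv_def wsrv_def by auto
qed

lemma prog_Recv:
  assumes "trans n f \<Phi> (Recv m i) \<sigma> = Some \<sigma>'" "Suc f \<le> n"
  shows "prog n M \<sigma> \<sigma>'"
proof -
  let ?s = "sst \<sigma> i"
  have inn: "(m, i) \<in># net \<sigma>" and i: "i < n" and s': "\<sigma>' = \<sigma>\<lparr> net := net \<sigma> - {# (m, i) #},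
                     sst := (sst \<sigma>)(i := srv_recv n f \<Phi> i m ?s) \<rparr>"
    using assms(1) by (auto simp: trans_def Let_def split: if_splits)
  have loc: "mu n M \<sigma>' + 2*ncnt M (net \<sigma>) + wsrv n M (sst \<sigma> i) = mu n M \<sigma> + 2*ncnt M (net \<sigma>') + wsrv n M (sst \<sigma>' i)"
    by (rule server_local(1)) (use i in \<open>auto simp: s'\<close>)
  have nd: "ncnt M (net \<sigma>') + (if mid_of m = M then 1 else 0) = ncnt M (net \<sigma>)"
    using ncnt_diff[OF inn, of M] by (simp add: s')
  show ?thesis
  proof (cases "mid_of m = M")
    case True
    have "wsrv n M (sst \<sigma>' i) \<le> wsrv n M (sst \<sigma> i) + 1"
      using wsrv_recv[OF True assms(2)] by (simp add: s')
    then show ?thesis using loc nd True by simp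
  next
    case False
    have tr: "trip M (sst \<sigma>' i) = trip M (sst \<sigma> i)"
      using srv_recv_other[OF False] by (simp add: s' trip_def)
    then have "wsrv n M (sst \<sigma>' i) = wsrv n M (sst \<sigma> i)" by (simp add: trip_def wsrv_def)
    moreover have "mpart n M \<sigma>' = mpart n M \<sigma>"
      by (rule server_local(2)) (use i tr in \<open>auto simp: s'\<close>)
    ultimately show ?thesis using loc nd False by simp
  qed
qed

lemma prog_SendS:
  assumes "trans n f \<Phi> (SendS i M') \<sigma> = Some \<sigma>'" "minv f \<sigma>"
  shows "prog n M \<sigma> \<sigma>'"
proof -
  let ?s = "sst \<sigma> i"
  let ?q = "outQueue ?s M'"
  have ne: "?q \<noteq> []" and i: "i < n" and s': "\<sigma>' = \<sigma>\<lparr> sst := (sst \<sigma>)(i := ?s\<lparr> outQueue := (outQueue ?s)(M' := tl ?q),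
                       status := (if tl ?q = [] then (status ?s)(M' := Some Ready) else status ?s) \<rparr>),
                    net := net \<sigma> + {# hd ?q #} \<rparr>"
    using assms(1) by (auto simp: trans_def Let_def split: if_splits)
  have loc: "mu n M \<sigma>' + 2*ncnt M (net \<sigma>) + wsrv n M (sst \<sigma> i) = mu n M \<sigma> + 2*ncnt M (net \<sigma>') + wsrv n M (sst \<sigma>' i)"
    by (rule server_local(1)) (use i in \<open>auto simp: s'\<close>)
  have nc: "ncnt M (net \<sigma>') = ncnt M (net \<sigma>) + (if mid_of (fst (hd ?q)) = M then 1 else 0)"
    by (simp add: s' ncnt_add_mset)
  show ?thesis
  proof (cases "M' = M")
    case True
    have "wsrv n M (sst \<sigma>' i) + 3 \<le> wsrv n M (sst \<sigma> i)"
      using ne True unfolding s' wsrv_def by (cases ?q) auto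
    then show ?thesis using loc nc by (auto split: if_splits)
  next
    case False
    have "hd ?q \<in> set ?q" using ne by simp
    then have "mid_of (fst (hd ?q)) = M'" using assms(2) unfolding minv_def inv2_def
      by (metis prod.collapse)
    then have nc': "ncnt M (net \<sigma>') = ncnt M (net \<sigma>)" using nc False by simp
    have tr: "trip M (sst \<sigma>' i) = trip M (sst \<sigma> i)" using False by (simp add: s' trip_def)
    then have "wsrv n M (sst \<sigma>' i) = wsrv n M (sst \<sigma> i)" by (simp add: trip_def wsrv_def)
    moreover have "mpart n M \<sigma>' = mpart n M \<sigma>"
      by (rule server_local(2)) (use i tr in \<open>auto simp: s'\<close>)
    ultimately show ?thesis using loc nc' by simp
  qed
qed

lemma prog_Deliver:
  assumes "trans n f \<Phi> (Deliver i M') \<sigma> = Some \<sigma>'"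
  shows "prog n M \<sigma> \<sigma>'"
proof -
  let ?s = "sst \<sigma> i"
  have c: "status ?s M' = Some Ready" "content ?s M' \<noteq> None" and i: "i < n" and
    s': "\<sigma>' = \<sigma>\<lparr> sst := (sst \<sigma>)(i := ?s\<lparr> status := (status ?s)(M' := Some Delivered),
                                               content := (content ?s)(M' := None) \<rparr>) \<rparr>"
    using assms(1) by (auto simp: trans_def Let_def split: if_splits)
  have loc: "mu n M \<sigma>' + 2*ncnt M (net \<sigma>) + wsrv n M (sst \<sigma> i) = mu n M \<sigma> + 2*ncnt M (net \<sigma>') + wsrv n M (sst \<sigma>' i)"
    by (rule server_local(1)) (use i in \<open>auto simp: s'\<close>)
  have nc: "net \<sigma>' = net \<sigma>" by (simp add: s')
  show ?thesis
  proof (cases "M' = M")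
    case True
    have "wsrv n M (sst \<sigma>' i) + 1 = wsrv n M (sst \<sigma> i)"
      using c True unfolding s' wsrv_def by auto
    then show ?thesis using loc nc by simp
  next
    case False
    have tr: "trip M (sst \<sigma>' i) = trip M (sst \<sigma> i)" using False by (simp add: s' trip_def)
    then have "wsrv n M (sst \<sigma>' i) = wsrv n M (sst \<sigma> i)" by (simp add: trip_def wsrv_def)
    moreover have "mpart n M \<sigma>' = mpart n M \<sigma>"
      by (rule server_local(2)) (use i tr in \<open>auto simp: s'\<close>)
    ultimately show ?thesis using loc nc by simp
  qed
qed

lemma prog_FailS:
  assumes "trans n f \<Phi> (FailS i) \<sigma> = Some \<sigma>'"
  shows "prog n M \<sigma> \<sigma>'"
proof -
  have i: "i < n" and s': "\<sigma>' = \<sigma>\<lparr> sst := (sst \<sigma>)(i := (sst \<sigma> i)\<lparr> sfailed := True \<rparr>) \<rparr>"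
    using assms(1) by (auto simp: trans_def Let_def split: if_splits)
  have loc: "mu n M \<sigma>' + 2*ncnt M (net \<sigma>) + wsrv n M (sst \<sigma> i) = mu n M \<sigma> + 2*ncnt M (net \<sigma>') + wsrv n M (sst \<sigma>' i)"
    by (rule server_local(1)) (use i in \<open>auto simp: s'\<close>)
  have tr: "trip M (sst \<sigma>' i) = trip M (sst \<sigma> i)" by (simp add: s' trip_def)
  then have "wsrv n M (sst \<sigma>' i) = wsrv n M (sst \<sigma> i)" by (simp add: trip_def wsrv_def)
  moreover have "mpart n M \<sigma>' = mpart n M \<sigma>"
    by (rule server_local(2)) (use i tr in \<open>auto simp: s'\<close>)
  ultimately show ?thesis using loc by (simp add: s')
qed



lemma prog_MdSend:
  assumes "trans n f \<Phi> (MdSend q t v) \<sigma> = Some \<sigma>'"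
    and C: "wfailed (wst \<sigma> (fst M)) \<or> snd M \<le> mCount (wst \<sigma> (fst M))"
  shows "prog n M \<sigma> \<sigma>'"
proof (cases "wfailed (wst \<sigma> q)")
  case True
  then have "\<sigma>' = \<sigma>" using assms(1) by (simp add: trans_def Let_def)
  then show ?thesis by simp
next
  case False
  let ?w = "wst \<sigma> q"
  let ?M = "(q, Suc (mCount ?w))"
  have s': "\<sigma>' = \<sigma>\<lparr> wst := (wst \<sigma>)(q := ?w\<lparr> mCount := Suc (mCount ?w), cur_mID := Some ?M,
                 send_buff := [(Full ?M t v, j). j \<leftarrow> [0..<Suc f]],
                 active := True, currTag := Some t \<rparr>) \<rparr>"
    using assms(1) False by (simp add: trans_def Let_def)
  have loc: "mu n M \<sigma>' + 3 * length (bpart M \<sigma>) + 2*ncnt M (net \<sigma>) = mu n M \<sigma> + 3 * length (bpart M \<sigma>') + 2*ncnt M (net \<sigma>')"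
    by (rule writer_local(1)) (simp add: s')
  show ?thesis
  proof (cases "q = fst M")
    case True
    have "?M \<noteq> M" using C False True by (cases M) auto
    then have "bpart M \<sigma>' = []" unfolding bpart_def s' using True by auto
    moreover have "mpart n M \<sigma>' = mpart n M \<sigma>" if "bpart M \<sigma> = []"
      by (rule writer_local(2)) (use that \<open>bpart M \<sigma>' = []\<close> in \<open>simp_all add: s'\<close>)
    ultimately show ?thesis using loc by (cases "bpart M \<sigma>") (auto simp: s')
  next
    case False
    have "bpart M \<sigma>' = bpart M \<sigma>" unfolding bpart_def s' using False by auto
    moreover have "mpart n M \<sigma>' = mpart n M \<sigma>"
      by (rule writer_local(2)) (use \<open>bpart M \<sigma>' = bpart M \<sigma>\<close> in \<open>simp_all add: s'\<close>)
    ultimately show ?thesis using loc by (auto simp: s')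
  qed
qed

lemma filter_hd1: "xs \<noteq> [] \<Longrightarrow> P (hd xs) \<Longrightarrow> filter P xs = hd xs # filter P (tl xs)"
  by (cases xs) auto

lemma filter_hd2: "xs \<noteq> [] \<Longrightarrow> \<not> P (hd xs) \<Longrightarrow> filter P (tl xs) = filter P xs"
  by (cases xs) auto

lemma prog_SendW:
  assumes "trans n f \<Phi> (SendW q) \<sigma> = Some \<sigma>'" "minv f \<sigma>"
  shows "prog n M \<sigma> \<sigma>'"
proof -
  let ?b = "send_buff (wst \<sigma> q)"
  have ne: "?b \<noteq> []" and s': "\<sigma>' = \<sigma>\<lparr> wst := (wst \<sigma>)(q := (wst \<sigma> q)\<lparr> send_buff := tl ?b \<rparr>),
                    net := net \<sigma> + {# hd ?b #} \<rparr>"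
    using assms(1) by (auto simp: trans_def Let_def split: if_splits)
  have loc: "mu n M \<sigma>' + 3 * length (bpart M \<sigma>) + 2*ncnt M (net \<sigma>) = mu n M \<sigma> + 3 * length (bpart M \<sigma>') + 2*ncnt M (net \<sigma>')"
    by (rule writer_local(1)) (simp add: s')
  have nc: "ncnt M (net \<sigma>') = ncnt M (net \<sigma>) + (if mid_of (fst (hd ?b)) = M then 1 else 0)"
    by (simp add: s' ncnt_add_mset)
  have hm: "mid_of (fst (hd ?b)) = (q, mCount (wst \<sigma> q))"
    using assms(2) ne unfolding minv_def inv1_def by (metis list.set_sel(1) prod.collapse)
  have bq: "?b = hd ?b # tl ?b" using ne by simp
  show ?thesis
  proof (cases "q = fst M \<and> mid_of (fst (hd ?b)) = M")
    case True
    have "bpart M \<sigma> = hd ?b # bpart M \<sigma>'" unfolding bpart_def s' using True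
      filter_hd1[OF ne, of "\<lambda>x. mid_of (fst x) = M"] by auto
    have hh: "mid_of (fst (hd (send_buff (wst \<sigma> (fst M))))) = M" using True by auto
    have "mu n M \<sigma>' + 3 = mu n M \<sigma> + 2" using loc nc hh \<open>bpart M \<sigma> = hd ?b # bpart M \<sigma>'\<close> True by simp
    then show ?thesis by simp
  next
    case False
    have nb: "bpart M \<sigma>' = bpart M \<sigma>"
    proof (cases "q = fst M")
      case True
      then have "mid_of (fst (hd ?b)) \<noteq> M" using False by simp
      then show ?thesis unfolding bpart_def s' using True
        filter_hd2[OF ne, of "\<lambda>x. mid_of (fst x) = M"] by auto
    next
      case False
      then show ?thesis unfolding bpart_def s' by simp
    qed
    have "mid_of (fst (hd ?b)) \<noteq> M" using False hm by (cases M) auto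
    then have "ncnt M (net \<sigma>') = ncnt M (net \<sigma>)" using nc by simp
    moreover have "mpart n M \<sigma>' = mpart n M \<sigma>"
      by (rule writer_local(2)) (use nb in \<open>simp_all add: s'\<close>)
    ultimately show ?thesis using loc nb by simp
  qed
qed

lemma prog_Ack: "trans n f \<Phi> (Ack q) \<sigma> = Some \<sigma>' \<Longrightarrow> prog n M \<sigma> \<sigma>'"
  by (auto simp: trans_def Let_def mu_def mpart_def bpart_def split: if_splits)

lemma prog_FailW: "trans n f \<Phi> (FailW q) \<sigma> = Some \<sigma>' \<Longrightarrow> prog n M \<sigma> \<sigma>'"
  by (auto simp: trans_def Let_def mu_def mpart_def bpart_def split: if_splits)

lemma prog_step:
  assumes "trans n f \<Phi> a \<sigma> = Some \<sigma>'" "minv f \<sigma>" "Suc f \<le> n"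
    and "wfailed (wst \<sigma> (fst M)) \<or> snd M \<le> mCount (wst \<sigma> (fst M))"
  shows "prog n M \<sigma> \<sigma>'"
proof (cases a)
  case (MdSend x y z) show ?thesis using prog_MdSend[OF assms(1)[unfolded MdSend] assms(4)] .
next
  case (SendW x) show ?thesis using prog_SendW[OF assms(1)[unfolded SendW] assms(2)] .
next
  case (Ack x) show ?thesis using prog_Ack[OF assms(1)[unfolded Ack]] .
next
  case (FailW x) show ?thesis using prog_FailW[OF assms(1)[unfolded FailW]] .
next
  case (Recv x y) show ?thesis using prog_Recv[OF assms(1)[unfolded Recv] assms(3)] .
next
  case (SendS x y) show ?thesis using prog_SendS[OF assms(1)[unfolded SendS] assms(2)] .
next
  case (Deliver x y) show ?thesis using prog_Deliver[OF assms(1)[unfolded Deliver]] .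
next
  case (FailS x) show ?thesis using prog_FailS[OF assms(1)[unfolded FailS]] .
qed

lemma mono_step:
  assumes "trans n f \<Phi> a \<sigma> = Some \<sigma>'"
  shows "(wfailed (wst \<sigma> q) \<longrightarrow> wfailed (wst \<sigma>' q)) \<and> mCount (wst \<sigma> q) \<le> mCount (wst \<sigma>' q)
     \<and> (sfailed (sst \<sigma> i) \<longrightarrow> sfailed (sst \<sigma>' i))"
  using assms by (cases a) (auto simp: trans_def Let_def srv_recv_failed split: if_splits)



lemma nat_stab:
  fixes g :: "nat \<Rightarrow> nat"
  assumes "\<forall>k\<ge>k0. g (Suc k) \<le> g k"
  shows "\<exists>K\<ge>k0. \<forall>k\<ge>K. g k = g K"
proof -
  let ?m = "LEAST x. \<exists>k\<ge>k0. g k = x"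
  have ex: "\<exists>x k. k \<ge> k0 \<and> g k = x" by blast
  have "\<exists>k\<ge>k0. g k = ?m" using LeastI_ex[of "\<lambda>x. \<exists>k\<ge>k0. g k = x"] ex by blast
  then obtain K where K: "K \<ge> k0" "g K = ?m" by blast
  have "g k \<le> g K" if "k \<ge> K" for k
    using that
  proof (induction k rule: dec_induct)
    case base then show ?case by simp
  next
    case (step k) then show ?case using assms K(1) by (meson le_trans)
  qed
  moreover have "g K \<le> g k" if "k \<ge> K" for k
    using K that by (metis (mono_tags, lifting) Least_le le_trans)
  ultimately show ?thesis using K(1) by (meson antisym)
qed

lemma bool_mono:
  assumes "\<forall>k. g k \<longrightarrow> g (Suc k)" "k \<le> k'" "g k" shows "g k'"
  using assms(2,3) by (induction k' rule: dec_induct) (use assms(1) in auto)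

lemma bool_stab:
  fixes N :: nat and g :: "nat \<Rightarrow> nat \<Rightarrow> bool"
  assumes "\<forall>i<N. \<forall>k. g i k \<longrightarrow> g i (Suc k)"
  shows "\<exists>j\<ge>K. \<forall>i<N. \<forall>k\<ge>j. g i k = g i j"
  using assms
proof (induction N)
  case 0 show ?case by (rule exI[of _ K]) simp
next
  case (Suc N)
  have "\<forall>i<N. \<forall>k. g i k \<longrightarrow> g i (Suc k)" using Suc.prems by simp
  then obtain j where j: "j \<ge> K" "\<forall>i<N. \<forall>k\<ge>j. g i k = g i j" using Suc.IH by blast
  have mN: "\<forall>k. g N k \<longrightarrow> g N (Suc k)" using Suc.prems by simp
  obtain j' where j': "j' \<ge> j" "\<forall>k\<ge>j'. g N k = g N j'"
  proof (cases "\<exists>k\<ge>j. g N k")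
    case True
    then obtain k0 where "k0 \<ge> j" "g N k0" by blast
    then have "\<forall>k\<ge>k0. g N k = g N k0" using bool_mono[OF mN _ \<open>g N k0\<close>] by simp
    then show ?thesis using that[of k0] \<open>k0 \<ge> j\<close> by blast
  next
    case False
    then have "\<forall>k\<ge>j. g N k = g N j" by simp
    then show ?thesis using that[of j] by blast
  qed
  have "\<forall>i<Suc N. \<forall>k\<ge>j'. g i k = g i j'"
  proof (intro allI impI)
    fix i k assume "i < Suc N" "j' \<le> k"
    show "g i k = g i j'"
    proof (cases "i = N")
      case True then show ?thesis using j'(2) \<open>j' \<le> k\<close> by blast
    next
      case False
      then have "i < N" using \<open>i < Suc N\<close> by simp
      have "g i k = g i j" using j(2) \<open>i < N\<close> j'(1) \<open>j' \<le> k\<close> le_trans by blast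
      moreover have "g i j' = g i j" using j(2) \<open>i < N\<close> j'(1) by blast
      ultimately
      show ?thesis by simp
    qed
  qed
  moreover have "j' \<ge> K" using j(1) j'(1) by simp
  ultimately show ?case by blast
qed

lemma filter_all:
  assumes a1: "filter (\<lambda>x. Q x = M) xs \<noteq> []" and a2: "\<forall>x\<in>set xs. Q x = c"
  shows "filter (\<lambda>x. Q x = M) xs = xs"
proof -
  have "\<exists>x\<in>set xs. Q x = M" using a1 unfolding filter_empty_conv by simp
  then obtain x where x: "x \<in> set xs" "Q x = M" by (elim bexE)
  have cM: "c = M" using x a2 by simp
  have "\<forall>x\<in>set xs. Q x = M" using a2 cM by simp
  then show ?thesis by (simp add: filter_id_conv)
qed



lemma eff_SendS: "trans n f \<Phi> (SendS i M) \<sigma> = Some \<sigma>' \<Longrightarrow> outQueue (sst \<sigma>' i) M = tl (outQueue (sst \<sigma> i) M)"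
  by (auto simp: trans_def Let_def split: if_splits)
lemma eff_Deliver: "trans n f \<Phi> (Deliver i M) \<sigma> = Some \<sigma>' \<Longrightarrow> content (sst \<sigma>' i) M = None"
  by (auto simp: trans_def Let_def split: if_splits)
lemma eff_SendW: "trans n f \<Phi> (SendW q) \<sigma> = Some \<sigma>' \<Longrightarrow> send_buff (wst \<sigma>' q) = tl (send_buff (wst \<sigma> q))"
  by (auto simp: trans_def Let_def split: if_splits)

lemma en_SendS: "i < n \<Longrightarrow> \<not> sfailed (sst \<sigma> i) \<Longrightarrow> outQueue (sst \<sigma> i) M \<noteq> [] \<Longrightarrow> enabled n f \<Phi> (SendS i M) \<sigma>"
  by (auto simp: enabled_def trans_def Let_def)
lemma en_Deliver: "i < n \<Longrightarrow> \<not> sfailed (sst \<sigma> i) \<Longrightarrow> status (sst \<sigma> i) M = Some Ready \<Longrightarrow> content (sst \<sigma> i) M \<noteq> None \<Longrightarrow> enabled n f \<Phi> (Deliver i M) \<sigma>"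
  by (auto simp: enabled_def trans_def Let_def)
lemma en_SendW: "\<not> wfailed (wst \<sigma> q) \<Longrightarrow> send_buff (wst \<sigma> q) \<noteq> [] \<Longrightarrow> enabled n f \<Phi> (SendW q) \<sigma>"
  by (auto simp: enabled_def trans_def Let_def)

lemma tl_neq: "xs \<noteq> [] \<Longrightarrow> tl xs \<noteq> xs"
  by (cases xs) auto

lemma eff_MdSend: "trans n f \<Phi> (MdSend q t v) \<sigma> = Some \<sigma>' \<Longrightarrow> \<not> wfailed (wst \<sigma> q) \<Longrightarrow>
   mCount (wst \<sigma>' q) = Suc (mCount (wst \<sigma> q))"
  by (auto simp: trans_def Let_def)

lemma fair_taken:
  assumes "fair n f \<Phi> ex act" "locally_controlled a" "\<forall>k\<ge>k0. enabled n f \<Phi> a (ex k)"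
  shows "\<exists>k\<ge>k0. act k = Some a"
  using assms unfolding fair_def by blast

lemma carries_mid: "msg_carries n \<Phi> M v m \<Longrightarrow> mid_of m = M"
  by (auto simp: msg_carries_def)

theorem theorem2:
  fixes n f k :: nat
    and \<Phi> :: "nat \<Rightarrow> 'v \<Rightarrow> 'c"
    and ex :: "nat \<Rightarrow> ('w, 't::linorder, 'v, 'c) gstate"
    and act :: "nat \<Rightarrow> ('w, 't, 'v, 'c) action option"
    and e :: nat and p :: 'w and t :: 't and v :: 'v
  assumes "1 \<le> f" and "2 * f + 1 \<le> n"
    and "mds_code n k \<Phi>"
    and "is_execution n f \<Phi> ex act"
    and "fair n f \<Phi> ex act"
    and "crash_bound n f ex"
    and "well_formed act"
    and "act e = Some (MdSend p t v)"
  shows "\<exists>j \<ge> Suc e.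
           (wfailed (wst (ex j) p) \<or>
              (\<forall>j' \<ge> j. \<not> sender_holds n \<Phi> (p, Suc (mCount (wst (ex e) p))) v (wst (ex j') p)))
         \<and> (\<forall>i < n. sfailed (sst (ex j) i) \<or>
              (\<forall>j' \<ge> j. \<not> server_holds n \<Phi> (p, Suc (mCount (wst (ex e) p))) v (sst (ex j') i)))"
proof -
  define M where "M = (p, Suc (mCount (wst (ex e) p)))"
  have nf: "Suc f < n" using assms(1,2) by simp
  have ex0: "ex 0 = init_state" using assms(4) by (simp add: is_execution_def)
  have stAll: "case act k of None \<Rightarrow> ex (Suc k) = ex k | Some a \<Rightarrow> trans n f \<Phi> a (ex k) = Some (ex (Suc k))" for k
    using assms(4) unfolding is_execution_def by blast
  have stS: "trans n f \<Phi> a (ex k) = Some (ex (Suc k))" if "act k = Some a" for k a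
    using stAll[of k] that by simp
  have stN: "ex (Suc k) = ex k" if "act k = None" for k
    using stAll[of k] that by simp
  have INV: "minv f (ex k)" for k
  proof (induction k)
    case 0 then show ?case using ex0 minv_init by simp
  next
    case (Suc k)
    show ?case
    proof (cases "act k")
      case None then show ?thesis using Suc stN by simp
    next
      case (Some a) then show ?thesis using minv_step[OF Suc stS[OF Some] nf] by simp
    qed
  qed
  have mono1: "(wfailed (wst (ex k) q) \<longrightarrow> wfailed (wst (ex (Suc k)) q)) \<and> mCount (wst (ex k) q) \<le> mCount (wst (ex (Suc k)) q)
     \<and> (sfailed (sst (ex k) i) \<longrightarrow> sfailed (sst (ex (Suc k)) i))" for k q i
  proof (cases "act k")
    case None then show ?thesis using stN by simp
  next
    case (Some a) then show ?thesis using mono_step[OF stS[OF Some]] by blast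
  qed
  have C0: "wfailed (wst (ex (Suc e)) p) \<or> snd M \<le> mCount (wst (ex (Suc e)) p)"
  proof (cases "wfailed (wst (ex e) p)")
    case True then show ?thesis using mono1 by blast
  next
    case False
    have "trans n f \<Phi> (MdSend p t v) (ex e) = Some (ex (Suc e))" by (rule stS[OF assms(8)])
    then have "mCount (wst (ex (Suc e)) p) = Suc (mCount (wst (ex e) p))"
      using False by (rule eff_MdSend)
    then show ?thesis by (simp add: M_def)
  qed
  have C: "wfailed (wst (ex k) (fst M)) \<or> snd M \<le> mCount (wst (ex k) (fst M))" if "k \<ge> Suc e" for k
    using that
  proof (induction k rule: dec_induct)
    case base then show ?case using C0 by (simp add: M_def)
  next
    case (step k) then show ?case using mono1[of k "fst M"] by auto
  qed
  have PROG: "prog n M (ex k) (ex (Suc k))" if "k \<ge> Suc e" for k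
  proof (cases "act k")
    case None then show ?thesis using stN by simp
  next
    case (Some a) then show ?thesis using prog_step[OF stS[OF Some] INV, of M] nf C[OF that] by simp
  qed
  obtain K where K: "K \<ge> Suc e" "\<forall>k\<ge>K. mu n M (ex k) = mu n M (ex K)"
  proof -
    have "\<forall>k\<ge>Suc e. mu n M (ex (Suc k)) \<le> mu n M (ex k)"
    proof (intro allI impI)
      fix k assume "Suc e \<le> k"
      then show "mu n M (ex (Suc k)) \<le> mu n M (ex k)" using PROG[of k] by auto
    qed
    then show ?thesis using nat_stab[of "Suc e" "\<lambda>k. mu n M (ex k)"] that by blast
  qed
  have MP: "mpart n M (ex k) = mpart n M (ex K)" if "k \<ge> K" for k
    using that
  proof (induction k rule: dec_induct)
    case base then show ?case by simp
  next
    case (step k)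
    have a1: "mu n M (ex (Suc k)) = mu n M (ex K)" using K(2) step(1,2) by (meson le_SucI)
    have a2: "mu n M (ex k) = mu n M (ex K)" using K(2) step(1) by blast
    have "mu n M (ex (Suc k)) = mu n M (ex k)" using a1 a2 by (rule trans[OF _ sym])
    then have "mpart n M (ex (Suc k)) = mpart n M (ex k)" using PROG[of k] K(1) step(1) by simp
    then show ?case using step(3) by simp
  qed
  obtain j1 where j1: "j1 \<ge> K" "\<forall>i<n. \<forall>k\<ge>j1. sfailed (sst (ex k) i) = sfailed (sst (ex j1) i)"
    using bool_stab[of n "\<lambda>i k. sfailed (sst (ex k) i)" K] mono1 by blast
  obtain j where j: "j \<ge> j1" "\<forall>i<Suc 0. \<forall>k\<ge>j. wfailed (wst (ex k) p) = wfailed (wst (ex j) p)"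
    using bool_stab[of "Suc 0" "\<lambda>i k. wfailed (wst (ex k) p)" j1] mono1 by blast
  have jK: "j \<ge> K" using j(1) j1(1) by simp
  have sfj: "\<forall>i<n. \<forall>k\<ge>j. sfailed (sst (ex k) i) = sfailed (sst (ex j) i)"
  proof (intro allI impI)
    fix i k assume "i < n" "j \<le> k"
    then have "sfailed (sst (ex k) i) = sfailed (sst (ex j1) i)" "sfailed (sst (ex j) i) = sfailed (sst (ex j1) i)"
      using j1(2) j(1) le_trans by blast+
    then show "sfailed (sst (ex k) i) = sfailed (sst (ex j) i)" by simp
  qed
  have wfj: "\<forall>k\<ge>j. wfailed (wst (ex k) p) = wfailed (wst (ex j) p)" using j(2) by blast
  have BP: "bpart M (ex k) = bpart M (ex K)" if "k \<ge> K" for k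
    using MP[OF that] by (simp add: mpart_def)
  have TP: "trip M (sst (ex k) i) = trip M (sst (ex K) i)" if "k \<ge> K" "i < n" for k i
  proof -
    have "snd (mpart n M (ex k)) i = snd (mpart n M (ex K)) i" using MP[OF that(1)] by simp
    then show ?thesis using that(2) by (simp add: mpart_def)
  qed
  have writer: "wfailed (wst (ex j) p) \<or> (\<forall>j' \<ge> j. \<not> sender_holds n \<Phi> M v (wst (ex j') p))"
  proof (cases "wfailed (wst (ex j) p)")
    case True then show ?thesis by simp
  next
    case False
    note nw = False
    have "\<forall>j' \<ge> j. \<not> sender_holds n \<Phi> M v (wst (ex j') p)"
    proof (intro allI impI notI)
      fix j' assume jj: "j \<le> j'" and h: "sender_holds n \<Phi> M v (wst (ex j') p)"
      obtain m d where md0: "(m, d) \<in> set (send_buff (wst (ex j') p))" "msg_carries n \<Phi> M v m"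
        using h unfolding sender_holds_def by blast
      have md: "(m, d) \<in> set (send_buff (wst (ex j') p))" "mid_of m = M"
        using md0(1) carries_mid[OF md0(2)] by auto
      have fM: "fst M = p" by (simp add: M_def)
      have "bpart M (ex j') \<noteq> []" using md unfolding bpart_def fM filter_empty_conv by force
      then have Fne: "bpart M (ex K) \<noteq> []" using BP[of j'] jK jj by simp
      have buf: "send_buff (wst (ex k) p) = bpart M (ex K)" if "k \<ge> j" for k
      proof -
        have all: "\<forall>x\<in>set (send_buff (wst (ex k) p)). mid_of (fst x) = (p, mCount (wst (ex k) p))"
          using INV[of k] unfolding minv_def inv1_def by auto
        have "bpart M (ex k) = bpart M (ex K)" using BP[of k] that jK by simp
        then have ne: "filter (\<lambda>x. mid_of (fst x) = M) (send_buff (wst (ex k) p)) \<noteq> []"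
          using Fne unfolding bpart_def fM by simp
        have "filter (\<lambda>x. mid_of (fst x) = M) (send_buff (wst (ex k) p)) = send_buff (wst (ex k) p)"
          by (rule filter_all[OF ne all])
        then show ?thesis using \<open>bpart M (ex k) = bpart M (ex K)\<close> unfolding bpart_def fM by simp
      qed
      have "\<forall>k\<ge>j. enabled n f \<Phi> (SendW p) (ex k)"
      proof (intro allI impI)
        fix k assume "j \<le> k"
        show "enabled n f \<Phi> (SendW p) (ex k)"
        proof (rule en_SendW)
          show "\<not> wfailed (wst (ex k) p)" using wfj nw \<open>j \<le> k\<close> by blast
          show "send_buff (wst (ex k) p) \<noteq> []" using buf[OF \<open>j \<le> k\<close>] Fne by simp
        qed
      qed
      then obtain k where k: "k \<ge> j" "act k = Some (SendW p)"
        using fair_taken[OF assms(5), of "SendW p"] by auto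
      have "send_buff (wst (ex (Suc k)) p) = tl (bpart M (ex K))"
        using eff_SendW[OF stS[OF k(2)]] buf[OF k(1)] by simp
      moreover have "send_buff (wst (ex (Suc k)) p) = bpart M (ex K)" using buf[of "Suc k"] k(1) by simp
      ultimately show False using tl_neq[OF Fne] by simp
    qed
    then show ?thesis by simp
  qed
  have server: "sfailed (sst (ex j) i) \<or> (\<forall>j' \<ge> j. \<not> server_holds n \<Phi> M v (sst (ex j') i))"
    if i: "i < n" for i
  proof (cases "sfailed (sst (ex j) i)")
    case True then show ?thesis by simp
  next
    case False
    note ns = False
    have nsk: "\<not> sfailed (sst (ex k) i)" if "k \<ge> j" for k using sfj i that ns by blast
    obtain st ct Q where T: "trip M (sst (ex K) i) = (st, ct, Q)" by (cases "trip M (sst (ex K) i)") auto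
    have vals: "status (sst (ex k) i) M = st \<and> content (sst (ex k) i) M = ct \<and> outQueue (sst (ex k) i) M = Q"
      if "k \<ge> K" for k using TP[OF that i] T by (simp add: trip_def)
    have "\<forall>j' \<ge> j. \<not> server_holds n \<Phi> M v (sst (ex j') i)"
    proof (intro allI impI notI)
      fix j' assume jj: "j \<le> j'" and h: "server_holds n \<Phi> M v (sst (ex j') i)"
      have "content (sst (ex j') i) M \<noteq> None \<or> outQueue (sst (ex j') i) M \<noteq> []"
        using h unfolding server_holds_def by auto
      then have hv: "ct \<noteq> None \<or> Q \<noteq> []" using vals[of j'] jj jK by simp
      show False
      proof (cases "Q = []")
        case False
        have "\<forall>k\<ge>j. enabled n f \<Phi> (SendS i M) (ex k)"
        proof (intro allI impI)
          fix k assume "j \<le> k"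
          then show "enabled n f \<Phi> (SendS i M) (ex k)"
            using en_SendS[OF i nsk[OF \<open>j \<le> k\<close>]] vals[of k] jK False by simp
        qed
        then obtain k where k: "k \<ge> j" "act k = Some (SendS i M)"
          using fair_taken[OF assms(5), of "SendS i M"] by auto
        have "outQueue (sst (ex (Suc k)) i) M = tl Q"
          using eff_SendS[OF stS[OF k(2)]] vals[of k] k(1) jK by simp
        moreover have "outQueue (sst (ex (Suc k)) i) M = Q" using vals[of "Suc k"] k(1) jK by simp
        ultimately show False using tl_neq[OF False] by simp
      next
        case True
        then have ctn: "ct \<noteq> None" using hv by simp
        have i4: "inv4 (ex K)" using INV[of K] by (simp add: minv_def)
        have i4': "(st = None \<longrightarrow> ct = None \<and> Q = []) \<and> (st = Some Delivered \<longrightarrow> ct = None)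
            \<and> (st = Some Sending \<longrightarrow> Q \<noteq> [])"
          using i4 vals[of K] unfolding inv4_def by (metis order_refl)
        have "st = Some Ready"
        proof (cases st)
          case None then show ?thesis using i4' ctn by simp
        next
          case (Some x)
          then show ?thesis using i4' ctn True by (cases x) auto
        qed
        then have "\<forall>k\<ge>j. enabled n f \<Phi> (Deliver i M) (ex k)"
        proof (intro allI impI)
          fix k assume "j \<le> k"
          then show "enabled n f \<Phi> (Deliver i M) (ex k)"
            using en_Deliver[OF i nsk[OF \<open>j \<le> k\<close>]] vals[of k] jK ctn \<open>st = Some Ready\<close> by simp
        qed
        then obtain k where k: "k \<ge> j" "act k = Some (Deliver i M)"
          using fair_taken[OF assms(5), of "Deliver i M"] by auto
        have "content (sst (ex (Suc k)) i) M = None" using eff_Deliver[OF stS[OF k(2)]] .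
        moreover have "content (sst (ex (Suc k)) i) M = ct" using vals[of "Suc k"] k(1) jK by simp
        ultimately show False using ctn by simp
      qed
    qed
    then show ?thesis by simp
  qed
  have "j \<ge> Suc e" using jK K(1) by simp
  then show ?thesis using writer server unfolding M_def by blast
qed

end
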